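(* Let $\Omega = \{-1\} \cup [0,\infty)$, let $E$ be the Banach space of all bounded continuous real functions on $\Omega$ with the supremum norm, and let $$C = \{ x \in E : 0 \le x(u) \le 1 \text{ for all } u \in \Omega,\ |x(u_1)-x(u_2)| \le |u_1-u_2| \text{ for all } u_1,u_2 \in [0,\infty)\}.$$ For $x \in C$ and $v \ge 0$ put $\alpha_x(v) = \sup\{ x(s) : s \in \{-1\}\cup[v,\infty)\}$. For $t \in [0,1]$ and $x \in C$ define $T(t)x$ on $\Omega$ by $$(T(t)x)(u) = \begin{cases} x(-1), & u=-1,\\ x(u-t), & u \ge t,\\ x(0)-t+u, & 0\le u\le t \text{ and } 1-\alpha_x(1-t+u) \le x(0)-t+u,\\ x(0)+t-u, & 0\le u\le t \text{ and } 1-\alpha_x(1-t+u) \ge x(0)+t-u,\\ 1-\alpha_x(1-t+u), & 0 \le u \le t \text{ and } |1-\alpha_x(1-t+u)-x(0)| \le t-u. \end{cases}$$ Fix $x \in C$, $t \in [0,1]$, and $u_1,u_2$ with $0 \le u_1 \le u_2 \le t$. Then: (i) if $1-\alpha_x(1-t+u_1) < (T(t)x)(u_2) - u_2 + u_1$, then $(T(t)x)(u_1) = x(0)-t+u_1$ and $(T(t)x)(u_2) = x(0)-t+u_2$; (ii) if $1-\alpha_x(1-t+u_1) > (T(t)x)(u_2) + u_2 - u_1$, then $(T(t)x)(u_1) = x(0)+t-u_1$ and $(T(t)x)(u_2) = x(0)+t-u_2$; (iii) if $|1-\alpha_x(1-t+u_1) - (T(t)x)(u_2)| \le u_2 - u_1$,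 then $(T(t)x)(u_1) = 1-\alpha_x(1-t+u_1)$. *)

theory Defs
  imports "HOL-Analysis.Analysis"
begin

definition Omega :: "real set" where
  "Omega = {-1} \<union> {0..}"

text \<open>E: bounded continuous real functions on Omega; elements are represented as
  functions real to real whose values off Omega are irrelevant.\<close>
definition inE :: "(real \<Rightarrow> real) \<Rightarrow> bool" where
  "inE x \<longleftrightarrow> continuous_on Omega x \<and> bounded (x ` Omega)"

definition inC :: "(real \<Rightarrow> real) \<Rightarrow> bool" where
  "inC x \<longleftrightarrow> inE x \<and> (\<forall>u\<in>Omega. 0 \<le> x u \<and> x u \<le> 1) \<and>
     (\<forall>u1\<ge>0. \<forall>u2\<ge>0. \<bar>x u1 - x u2\<bar> \<le> \<bar>u1 - u2\<bar>)"

definition alpha :: "(real \<Rightarrow> real) \<Rightarrow> real \<Rightarrow> real" where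
  "alpha x v = Sup (x ` ({-1} \<union> {v..}))"

definition T :: "real \<Rightarrow> (real \<Rightarrow> real) \<Rightarrow> real \<Rightarrow> real" where
  "T t x u =
    (if u = -1 then x (-1)
     else if u \<ge> t \<and> u \<ge> 0 then x (u - t)
     else if 0 \<le> u \<and> u \<le> t \<and> 1 - alpha x (1 - t + u) \<le> x 0 - t + u then x 0 - t + u
     else if 0 \<le> u \<and> u \<le> t \<and> 1 - alpha x (1 - t + u) \<ge> x 0 + t - u then x 0 + t - u
     else if 0 \<le> u \<and> u \<le> t \<and> \<bar>1 - alpha x (1 - t + u) - x 0\<bar> \<le> t - u
       then 1 - alpha x (1 - t + u)
     else 0)"

end

theory Submission
  imports Defs
begin

lemma alpha_props:
  assumes C: "inC x" and v: "0 \<le> v" "v \<le> w"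
  shows "alpha x w \<le> alpha x v \<and> alpha x v \<le> alpha x w + (w - v)"
proof -
  have b01: "\<And>u. u \<in> Omega \<Longrightarrow> x u \<le> 1" using C unfolding inC_def by blast
  have lip: "\<And>a b. a \<ge> 0 \<Longrightarrow> b \<ge> 0 \<Longrightarrow> \<bar>x a - x b\<bar> \<le> \<bar>a - b\<bar>"
    using C unfolding inC_def by blast
  have bdd: "\<And>z. z \<ge> 0 \<Longrightarrow> bdd_above (x ` ({-1} \<union> {z..}))"
  proof -
    fix z :: real assume "z \<ge> 0"
    then have "\<forall>y\<in>x ` ({-1} \<union> {z..}). y \<le> 1" using b01 unfolding Omega_def by auto
    then show "bdd_above (x ` ({-1} \<union> {z..}))" unfolding bdd_above_def by blast
  qed
  have up: "\<And>z s. z \<ge> 0 \<Longrightarrow> s \<in> {-1} \<union> {z..} \<Longrightarrow> x s \<le> alpha x z"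
    unfolding alpha_def using bdd by (intro cSup_upper) auto
  have 1: "alpha x w \<le> alpha x v"
    unfolding alpha_def using v bdd[of v] by (intro cSup_subset_mono) auto
  have 2: "alpha x v \<le> alpha x w + (w - v)"
    unfolding alpha_def[of x v]
  proof (rule cSup_least)
    show "x ` ({-1} \<union> {v..}) \<noteq> {}" by auto
    fix y assume "y \<in> x ` ({-1} \<union> {v..})"
    then obtain s where s: "s \<in> {-1} \<union> {v..}" and y: "y = x s" by auto
    show "y \<le> alpha x w + (w - v)"
    proof (cases "s = -1 \<or> s \<ge> w")
      case True
      then have "x s \<le> alpha x w" using up[of w s] v by auto
      then show ?thesis using y v by linarith
    next
      case False
      then have "v \<le> s" "s < w" using s by auto
      then have "\<bar>x s - x w\<bar> \<le> \<bar>s - w\<bar>" using lip[of s w] v by linarith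
      moreover have "x w \<le> alpha x w" using up[of w w] v by auto
      ultimately show ?thesis using y \<open>v \<le> s\<close> \<open>s < w\<close> by (simp add: abs_if split: if_splits) linarith?
    qed
  qed
  show ?thesis using 1 2 by blast
qed

theorem lemma2p3:
  fixes x :: "real \<Rightarrow> real" and t u1 u2 :: real
  assumes "inC x" and "0 \<le> t" and "t \<le> 1"
    and "0 \<le> u1" and "u1 \<le> u2" and "u2 \<le> t"
  shows "(1 - alpha x (1 - t + u1) < T t x u2 - u2 + u1 \<longrightarrow>
            T t x u1 = x 0 - t + u1 \<and> T t x u2 = x 0 - t + u2)
       \<and> (1 - alpha x (1 - t + u1) > T t x u2 + u2 - u1 \<longrightarrow>
            T t x u1 = x 0 + t - u1 \<and> T t x u2 = x 0 + t - u2)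
       \<and> (\<bar>1 - alpha x (1 - t + u1) - T t x u2\<bar> \<le> u2 - u1 \<longrightarrow>
            T t x u1 = 1 - alpha x (1 - t + u1))"
proof -
  have P: "alpha x (1 - t + u2) \<le> alpha x (1 - t + u1) \<and>
     alpha x (1 - t + u1) \<le> alpha x (1 - t + u2) + ((1 - t + u2) - (1 - t + u1))"
    using alpha_props[OF assms(1), of "1 - t + u1" "1 - t + u2"] assms by linarith
  define A1 where "A1 = 1 - alpha x (1 - t + u1)"
  define A2 where "A2 = 1 - alpha x (1 - t + u2)"
  have D: "A1 \<le> A2" "A2 - A1 \<le> u2 - u1" using P unfolding A1_def A2_def by linarith+
  have T1: "T t x u1 = (if u1 \<ge> t then x 0 else if A1 \<le> x 0 - t + u1 then x 0 - t + u1
      else if A1 \<ge> x 0 + t - u1 then x 0 + t - u1 else if \<bar>A1 - x 0\<bar> \<le> t - u1 then A1 else 0)"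
  proof (cases "u1 \<ge> t")
    case True then have "u1 = t" using assms by linarith
    then show ?thesis unfolding T_def A1_def using assms by auto
  qed (unfold T_def A1_def, use assms in auto)
  have T2: "T t x u2 = (if u2 \<ge> t then x 0 else if A2 \<le> x 0 - t + u2 then x 0 - t + u2
      else if A2 \<ge> x 0 + t - u2 then x 0 + t - u2 else if \<bar>A2 - x 0\<bar> \<le> t - u2 then A2 else 0)"
  proof (cases "u2 \<ge> t")
    case True then have "u2 = t" using assms by linarith
    then show ?thesis unfolding T_def A2_def using assms by auto
  qed (unfold T_def A2_def, use assms in auto)
  show ?thesis unfolding A1_def[symmetric] T1 T2
    using D assms(4-6) by (auto simp: abs_if split: if_splits)
qed

end
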